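(* Let $(G,* )$ be a Tychonoff $\aleph_0$-bounded topological group. Then every Rothberger bounded subset of $G$ is zero-dimensional.
   Context: A topological group $(G,* )$ is $\aleph_0$-bounded if for every open neighborhood $U$ of the identity there is a countable $C\subseteq G$ with $C*U=G$. A subset $X$ of $G$ is Rothberger bounded if for every sequence $(U_n:n<\omega)$ of open neighborhoods of the identity there are $g_n\in G$ with $X\subseteq\bigcup_n g_n*U_n$. *)

theory Defs
  imports "HOL-Analysis.Analysis"
begin

text \<open>Topological groups are rendered via the type class topological_group_add
(a group_add, not necessarily commutative, with continuous addition and inversion);
the group operation written * in the paper is + here, the identity is 0.\<close>

definition Tychonoff_space :: "'a topology \<Rightarrow> bool" where
  "Tychonoff_space X \<longleftrightarrow> t1_space X \<and> completely_regular_space X"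

definition aleph0_bounded :: "'a::topological_group_add set \<Rightarrow> bool" where
  "aleph0_bounded G \<longleftrightarrow> G = UNIV \<and>
     (\<forall>U::'a set. open U \<and> 0 \<in> U \<longrightarrow> (\<exists>C. countable C \<and> (\<Union>c\<in>C. (+) c ` U) = G))"

definition rothberger_bounded :: "'a::topological_group_add set \<Rightarrow> bool" where
  "rothberger_bounded X \<longleftrightarrow>
     (\<forall>U::nat \<Rightarrow> 'a set. (\<forall>n. open (U n) \<and> 0 \<in> U n) \<longrightarrow>
        (\<exists>g::nat \<Rightarrow> 'a. X \<subseteq> (\<Union>n. (+) (g n) ` U n)))"

end

theory Submission
  imports Defs
begin
lemma nhds_half:
  assumes "open W" "(0::'a::topological_group_add) \<in> W"
  shows "\<exists>V. open V \<and> (0::'a) \<in> V \<and> (\<forall>a\<in>V. \<forall>b\<in>V. a + b \<in> W)"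
proof -
  have "eventually (\<lambda>p. fst p + snd p \<in> W) (nhds (0::'a) \<times>\<^sub>F nhds 0)"
    using topological_tendstoD[OF tendsto_add_Pair[of "0::'a" 0] assms(1)] assms(2) by simp
  then obtain Q where Q: "eventually Q (nhds (0::'a))" "\<forall>x y. Q x \<longrightarrow> Q y \<longrightarrow> fst (x,y) + snd (x,y) \<in> W"
    by (subst (asm) eventually_prod_same) blast
  then obtain S where "open S" "0 \<in> S" "\<forall>x\<in>S. Q x" unfolding eventually_nhds by blast
  thus ?thesis using Q(2) by (intro exI[of _ S]) auto
qed
lemma nhds_third:
  assumes "open W" "(0::'a::topological_group_add) \<in> W"
  shows "\<exists>V. open V \<and> (0::'a) \<in> V \<and> (\<forall>a\<in>V. \<forall>b\<in>V. \<forall>c\<in>V. a + b + c \<in> W)"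
proof -
  obtain V1 where V1: "open V1" "(0::'a) \<in> V1" "\<forall>a\<in>V1. \<forall>b\<in>V1. a + b \<in> W"
    using nhds_half[OF assms] by blast
  obtain V2 where V2: "open V2" "(0::'a) \<in> V2" "\<forall>a\<in>V2. \<forall>b\<in>V2. a + b \<in> V1"
    using nhds_half[OF V1(1,2)] by blast
  show ?thesis
  proof (intro exI[of _ "V2 \<inter> V1"] conjI ballI)
    show "open (V2 \<inter> V1)" using V1(1) V2(1) by (rule open_Int[rotated])
    show "0 \<in> V2 \<inter> V1" using V1(2) V2(2) by simp
    fix a b c assume "a \<in> V2 \<inter> V1" "b \<in> V2 \<inter> V1" "c \<in> V2 \<inter> V1"
    then have "a + b \<in> V1" "c \<in> V1" using V2(3) by auto
    then show "a + b + c \<in> W" using V1(3) by blast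
  qed
qed

lemma open_transl:
  fixes g :: "'a::topological_group_add"
  assumes "open U"
  shows "open ((+) g ` U)"
proof -
  have "(+) g ` U = (\<lambda>y. -g + y) -` U"
  proof
    show "(+) g ` U \<subseteq> (\<lambda>y. -g + y) -` U" by (auto simp: add.assoc[symmetric])
    show "(\<lambda>y. -g + y) -` U \<subseteq> (+) g ` U"
    proof
      fix y assume "y \<in> (\<lambda>y. -g + y) -` U"
      then have "-g + y \<in> U" by simp
      moreover have "y = g + (-g + y)" by (simp add: add.assoc[symmetric])
      ultimately show "y \<in> (+) g ` U" by (rule rev_image_eqI)
    qed
  qed
  moreover have "continuous_on UNIV (\<lambda>y. -g + y)"
    by (intro continuous_intros)
  ultimately show ?thesis using open_vimage[OF assms] by simp
qed

inductive chain :: "(nat \<Rightarrow> 'a set) \<Rightarrow> 'a \<Rightarrow> nat list \<Rightarrow> bool" for B x where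
  base: "x \<in> B n \<Longrightarrow> chain B x [n]"
| step: "chain B x ns \<Longrightarrow> B (last ns) \<inter> B m \<noteq> {} \<Longrightarrow> chain B x (ns @ [m])"

lemma chain_nonempty: "chain B x ns \<Longrightarrow> ns \<noteq> []"
  by (induction rule: chain.induct) auto

lemma chain_take: "chain B x ns \<Longrightarrow> k < length ns \<Longrightarrow> chain B x (take (Suc k) ns)"
proof (induction arbitrary: k rule: chain.induct)
  case (base n)
  then show ?case by (auto intro: chain.base)
next
  case (step ns m)
  show ?case
  proof (cases "k < length ns")
    case True
    then show ?thesis using step by simp
  next
    case False
    then have "k = length ns" using step.prems by simp
    then show ?thesis using step by (auto intro: chain.step)
  qed
qed

lemma chain_sum:
  fixes V :: "nat \<Rightarrow> 'a::group_add set"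
  assumes BV: "\<And>m y z. y \<in> B m \<Longrightarrow> z \<in> B m \<Longrightarrow> -y + z \<in> V (Suc m)"
  shows "chain B x ns \<Longrightarrow> y \<in> B (last ns) \<Longrightarrow>
    \<exists>ws. length ws = length ns \<and> (\<forall>i<length ns. ws!i \<in> V (Suc (ns!i))) \<and> y = x + sum_list ws"
proof (induction arbitrary: y rule: chain.induct)
  case (base n)
  have "-x + y \<in> V (Suc n)" using BV base by auto
  then show ?case
    by (intro exI[of _ "[-x + y]"]) (simp add: add.assoc[symmetric])
next
  case (step ns m)
  obtain b where b: "b \<in> B (last ns)" "b \<in> B m" using step.hyps(2) by blast
  obtain ws where ws: "length ws = length ns" "\<forall>i<length ns. ws!i \<in> V (Suc (ns!i))" "b = x + sum_list ws"
    using step.IH[OF b(1)] by blast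
  have w: "-b + y \<in> V (Suc m)" using BV b(2) step.prems by simp
  show ?case
  proof (intro exI[of _ "ws @ [-b + y]"] conjI allI impI)
    show "length (ws @ [- b + y]) = length (ns @ [m])" using ws by simp
    fix i assume "i < length (ns @ [m])"
    then show "(ws @ [- b + y]) ! i \<in> V (Suc ((ns @ [m]) ! i))"
      using ws w by (cases "i < length ns") (auto simp: nth_append less_Suc_eq)
  next
    have "y = b + (-b + y)" by (simp add: add.assoc[symmetric])
    also have "\<dots> = (x + sum_list ws) + (-b + y)" by (simp only: ws(3))
    also have "\<dots> = x + sum_list (ws @ [- b + y])" by (simp add: add.assoc)
    finally show "y = x + sum_list (ws @ [- b + y])" .
  qed
qed

lemma bk_sum:
  fixes V :: "nat \<Rightarrow> 'a::monoid_add set"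
  assumes V0: "\<And>k. 0 \<in> V k"
    and dec: "\<And>k n. n \<le> k \<Longrightarrow> V k \<subseteq> V n"
    and tri: "\<And>k a b c. a \<in> V (Suc k) \<Longrightarrow> b \<in> V (Suc k) \<Longrightarrow> c \<in> V (Suc k) \<Longrightarrow> a + b + c \<in> V k"
  shows "distinct (map fst ps) \<Longrightarrow> (\<forall>p\<in>set ps. n < fst p \<and> snd p \<in> V (fst p)) \<Longrightarrow>
    sum_list (map snd ps) \<in> V n"
proof (induction "length ps" arbitrary: ps n rule: less_induct)
  case less
  show ?case
  proof (cases "ps = []")
    case True
    then show ?thesis using V0 by simp
  next
    case False
    define m where "m = Min (fst ` set ps)"
    have fin: "finite (fst ` set ps)" by simp
    have "m \<in> fst ` set ps" unfolding m_def using False by (intro Min_in) auto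
    then obtain v where mv: "(m, v) \<in> set ps" by auto
    obtain p1 p2 where ps: "ps = p1 @ (m, v) # p2" using split_list[OF mv] by blast
    have mle: "\<And>p. p \<in> set ps \<Longrightarrow> m \<le> fst p" unfolding m_def using fin by auto
    have d: "distinct (map fst p1)" "distinct (map fst p2)" "m \<notin> fst ` set p1" "m \<notin> fst ` set p2"
      using less.prems(1) ps by auto
    have s1: "sum_list (map snd p1) \<in> V m"
    proof (rule less.hyps)
      show "length p1 < length ps" using ps by simp
      show "distinct (map fst p1)" by fact
      show "\<forall>p\<in>set p1. m < fst p \<and> snd p \<in> V (fst p)"
        using mle d(3) less.prems(2) ps by (fastforce simp: le_less image_iff)
    qed
    have s2: "sum_list (map snd p2) \<in> V m"
    proof (rule less.hyps)
      show "length p2 < length ps" using ps by simp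
      show "distinct (map fst p2)" by fact
      show "\<forall>p\<in>set p2. m < fst p \<and> snd p \<in> V (fst p)"
        using mle d(4) less.prems(2) ps by (fastforce simp: le_less image_iff)
    qed
    have nm: "n < m" and vV: "v \<in> V m" using less.prems(2) mv by auto
    then obtain k where k: "m = Suc k" "n \<le> k" by (cases m) auto
    have "sum_list (map snd p1) + v + sum_list (map snd p2) \<in> V k"
      by (rule tri) (use s1 s2 vV k in auto)
    then have "sum_list (map snd ps) \<in> V k" using ps by (simp add: add.assoc)
    then show ?thesis using dec[OF k(2)] by blast
  qed
qed

theorem proposition3:
  fixes X :: "'a::topological_group_add set"
  assumes "Tychonoff_space (euclidean :: 'a topology)"
    and "aleph0_bounded (UNIV :: 'a set)"
    and "rothberger_bounded X"
  shows "subtopology euclidean X dim_le 0"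
proof -
  have key: "\<exists>U. (closedin (subtopology euclidean X) U \<and> openin (subtopology euclidean X) U) \<and> x \<in> U \<and> U \<subseteq> W"
    if W: "openin (subtopology euclidean X) W" "x \<in> W" for W x
  proof -
    have "\<exists>W0. open W0 \<and> W = W0 \<inter> X" using W(1) by (simp add: openin_subtopology)
    then obtain W0 where W0: "open W0" "W = W0 \<inter> X" by blast
    have xX: "x \<in> X" "x \<in> W0" using W(2) W0(2) by auto
    define W1 where "W1 = (\<lambda>v. x + v) -` W0"
    have "continuous_on UNIV (\<lambda>v. x + v)" by (intro continuous_intros)
    then have oW1: "open W1" unfolding W1_def by (rule open_vimage[OF W0(1)])
    have W10: "0 \<in> W1" unfolding W1_def using xX by simp
    define P where "P = (\<lambda>W V. open V \<and> (0::'a) \<in> V \<and> (\<forall>a\<in>V. \<forall>b\<in>V. \<forall>c\<in>V. a + b + c \<in> W))"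
    have ex: "\<forall>W. \<exists>V. (open W \<and> (0::'a) \<in> W) \<longrightarrow> P W V"
    proof
      fix W :: "'a set"
      show "\<exists>V. (open W \<and> (0::'a) \<in> W) \<longrightarrow> P W V"
      proof (cases "open W \<and> (0::'a) \<in> W")
        case True
        then obtain V where "P W V" using nhds_third[of W] unfolding P_def by blast
        then show ?thesis by blast
      qed blast
    qed
    obtain f where f0: "\<forall>W. (open W \<and> (0::'a) \<in> W) \<longrightarrow> P W (f W)"
      using choice[OF ex] by blast
    have f: "open (f W) \<and> (0::'a) \<in> f W \<and> (\<forall>a\<in>f W. \<forall>b\<in>f W. \<forall>c\<in>f W. a + b + c \<in> W)"
      if "open W" "(0::'a) \<in> W" for W
      using f0 that unfolding P_def by blast
    define V where "V n = (f ^^ n) W1" for n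
    have Vp: "open (V n) \<and> 0 \<in> V n" for n
      by (induction n) (auto simp: V_def oW1 W10 f)
    have VS: "V (Suc k) = f (V k)" for k by (simp add: V_def)
    have tri: "a + b + c \<in> V k" if "a \<in> V (Suc k)" "b \<in> V (Suc k)" "c \<in> V (Suc k)" for k a b c
      using f[of "V k"] Vp[of k] that unfolding VS by blast
    have V0: "0 \<in> V k" for k using Vp by blast
    have decS: "V (Suc k) \<subseteq> V k" for k
    proof
      fix a assume "a \<in> V (Suc k)"
      then have "a + 0 + 0 \<in> V k" using tri V0 by blast
      then show "a \<in> V k" by simp
    qed
    have dec: "V k \<subseteq> V n" if "n \<le> k" for k n
      using lift_Suc_antimono_le[of V, OF decS that] .
    define U where "U m = V (Suc (Suc m)) \<inter> uminus -` V (Suc (Suc m))" for m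
    have "continuous_on UNIV (uminus :: 'a \<Rightarrow> 'a)"
      using continuous_on_minus[OF continuous_on_id] by simp
    then have oU: "open (U m) \<and> 0 \<in> U m" for m
      unfolding U_def using Vp open_vimage by (auto intro!: open_Int)
    have UV: "-u + u' \<in> V (Suc m)" if "u \<in> U m" "u' \<in> U m" for u u' m
    proof -
      have "-u + u' + 0 \<in> V (Suc m)"
        using tri[of "-u" "Suc m" u' 0] that V0 unfolding U_def by auto
      then show ?thesis by simp
    qed
    obtain g where cover: "X \<subseteq> (\<Union>n. (+) (g n) ` U n)"
      using assms(3) oU unfolding rothberger_bounded_def by blast
    define B where "B m = (+) (g m) ` U m" for m
    have oB: "open (B m)" for m unfolding B_def using oU open_transl by blast
    have BV: "-y + z \<in> V (Suc m)" if yz: "y \<in> B m" "z \<in> B m" for y z m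
    proof -
      obtain u u' where uu: "u \<in> U m" "u' \<in> U m" "y = g m + u" "z = g m + u'"
        using yz unfolding B_def by blast
      have "-y + z = -u + u'" unfolding uu by (simp add: minus_add add.assoc[symmetric])
      then show ?thesis using UV[OF uu(1,2)] by simp
    qed
    define R where "R = {n. \<exists>ns. chain B x ns \<and> distinct ns \<and> last ns = n}"
    have closure: "m \<in> R" if hh: "n \<in> R" "B n \<inter> B m \<noteq> {}" for n m
    proof -
      obtain ns where ns: "chain B x ns" "distinct ns" "last ns = n" using hh(1) R_def by blast
      show ?thesis
      proof (cases "m \<in> set ns")
        case True
        then obtain k where k: "k < length ns" "ns ! k = m" by (auto simp: in_set_conv_nth)
        have "take (Suc k) ns = take k ns @ [ns ! k]" using k(1) by (simp add: take_Suc_conv_app_nth)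
        then have "last (take (Suc k) ns) = m" using k by simp
        then show ?thesis unfolding R_def
          using chain_take[OF ns(1) k(1)] distinct_take[OF ns(2)] by blast
      next
        case False
        have "chain B x (ns @ [m])" using chain.step[OF ns(1)] ns(3) hh(2) by simp
        then show ?thesis unfolding R_def using False ns(2) by (intro CollectI exI[of _ "ns @ [m]"]) simp
      qed
    qed
    have start: "m \<in> R" if "x \<in> B m" for m
      unfolding R_def using chain.base[of x B m, OF that] by (intro CollectI exI[of _ "[m]"]) simp
    have bound: "y \<in> W0" if hh: "n \<in> R" "y \<in> B n" for n y
    proof -
      obtain ns where ns: "chain B x ns" "distinct ns" "last ns = n" using hh(1) R_def by blast
      obtain ws where ws: "length ws = length ns" "\<forall>i<length ns. ws!i \<in> V (Suc (ns!i))"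
          "y = x + sum_list ws"
        using chain_sum[of B V x ns y, OF BV ns(1)] hh(2) ns(3) by blast
      define ps where "ps = zip (map Suc ns) ws"
      have "sum_list (map snd ps) \<in> V 0"
      proof (rule bk_sum[of V, OF V0 dec tri])
        show "distinct (map fst ps)" unfolding ps_def using ws(1) ns(2)
          by (simp add: distinct_map)
        show "\<forall>p\<in>set ps. 0 < fst p \<and> snd p \<in> V (fst p)"
          unfolding ps_def set_zip using ws(1,2) by auto
      qed
      moreover have "map snd ps = ws" unfolding ps_def using ws(1) by simp
      ultimately have "sum_list ws \<in> W1" by (simp add: V_def)
      then show ?thesis using ws(3) unfolding W1_def by simp
    qed
    define K where "K = \<Union>(B ` R)"
    define L where "L = \<Union>(B ` (- R))"
    have oK: "open K" unfolding K_def using oB by blast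
    have oL: "open L" unfolding L_def using oB by blast
    have "X - K \<inter> X = L \<inter> X"
    proof
      show "X - K \<inter> X \<subseteq> L \<inter> X"
      proof
        fix y assume y: "y \<in> X - K \<inter> X"
        then obtain m where "y \<in> B m" using cover B_def by blast
        then show "y \<in> L \<inter> X" using y unfolding K_def L_def by blast
      qed
      show "L \<inter> X \<subseteq> X - K \<inter> X"
      proof
        fix y assume y: "y \<in> L \<inter> X"
        then obtain m where m: "m \<notin> R" "y \<in> B m" unfolding L_def by blast
        have "y \<notin> K"
        proof
          assume "y \<in> K"
          then obtain n where "n \<in> R" "y \<in> B n" unfolding K_def by blast
          then have "m \<in> R" using closure m(2) by blast
          then show False using m(1) by simp
        qed
        then show "y \<in> X - K \<inter> X" using y by blast
      qed
    qed
    then have "openin (subtopology euclidean X) (X - K \<inter> X)"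
      using oL by (auto simp: openin_subtopology)
    then have cl: "closedin (subtopology euclidean X) (K \<inter> X)"
      by (simp add: closedin_def Int_commute)
    have op: "openin (subtopology euclidean X) (K \<inter> X)"
      using oK by (auto simp: openin_subtopology)
    obtain m where "x \<in> B m" using cover xX(1) B_def by blast
    then have xK: "x \<in> K" unfolding K_def using start by blast
    have "K \<subseteq> W0" unfolding K_def using bound by blast
    then show ?thesis using cl op xK xX W0(2)
      by (intro exI[of _ "K \<inter> X"]) auto
  qed
  have "neighbourhood_base_of (\<lambda>U. closedin (subtopology euclidean X) U \<and> openin (subtopology euclidean X) U) (subtopology euclidean X)"
    by (subst open_neighbourhood_base_of) (use key in auto)
  then show ?thesis by (simp add: dimension_le_0_neighbourhood_base_of_clopen)
qed

end
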